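(* Let $C=(C_1,C_0,s,t,\varepsilon,m)$ be an internal category in $\mathsf{XMod}$ with $C_1=(A_1,B_1,\alpha_1)$, $C_0=(A_0,B_0,\alpha_0)$. Put $L=\ker s_A$, $M=\ker s_B$, $N=A_0$, $P=B_0$, $\lambda=\alpha_1|_{L}:L\to M$, $\lambda'=t_A|_{L}:L\to N$, $\mu=t_B|_{M}:M\to P$, $\nu=\alpha_0:N\to P$. Let $P$ act on $N$ by the given action of $B_0$ on $A_0$, on $M$ by $p\cdot m=1_p+m-1_p$, and on $L$ by $p\cdot l=1_p\cdot l$ (action of $B_1$ on $A_1$). Define $h:M\times N\to L$ by $h(m,n)=m\cdot 1_n-1_n$, where $m\cdot 1_n$ is the action of $m\in B_1$ on $1_n\in A_1$. Then $(L,M,N,P)$ with these data is a crossed square.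
   Context: Groups are written additively. A crossed module $(A,B,\alpha)$: groups $A,B$, a left action of $B$ on $A$ by automorphisms, a homomorphism $\alpha:A\to B$ with $\alpha(b\cdot a)=b+\alpha(a)-b$ and $\alpha(a)\cdot a'=a+a'-a$. Morphisms $\langle f_A,f_B\rangle$ are pairs of homomorphisms with $f_B\alpha=\alpha'f_A$, $f_A(b\cdot a)=f_B(b)\cdot f_A(a)$. An internal category in $\mathsf{XMod}$ consists of crossed modules $C_1=(A_1,B_1,\alpha_1)$, $C_0=(A_0,B_0,\alpha_0)$ and crossed module morphisms $s=\langle s_A,s_B\rangle, t=\langle t_A,t_B\rangle:C_1\to C_0$, $\varepsilon=\langle\varepsilon_A,\varepsilon_B\rangle:C_0\to C_1$, $m=\langle m_A,m_B\rangle:C_1\,{}_s\!\times_t C_1\to C_1$ (pullback computed componentwise, pairs $(x,y)$ with $s(x)=t(y)$, componentwise action) satisfying $s\varepsilon=t\varepsilon=1$, $sm=s\pi_2$, $tm=t\pi_1$, associativity $m(1\times m)=m(m\times1)$ and unit laws $m(\varepsilon s,1)=m(1,\varepsilon t)=1$. Notation: $1_x=\varepsilon_A(x)$ or $\varepsilon_B(x)$. A crossed square: homomorphisms $\lambda:L\to M$, $\lambda':L\to N$, $\mu:M\to P$, $\nu:N\to P$ with $\nu\lambda'=\mu\lambda$, left actions of $P$ on $L,M,N$ (inducing actions of $M$ on $L,N$ via $\mu$ and of $N$ on $L,M$ via $\nu$), and $h:M\times N\to L$, such that (i) $\lambda,\lambda'$ are $P$-equivariant and $\mu$, $\nu$,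 $\mu\lambda$ are crossed modules; (ii) $\lambda h(m,n)=m+n\cdot(-m)$, $\lambda'h(m,n)=m\cdot n-n$; (iii) $h(\lambda(l),n)=l+n\cdot(-l)$, $h(m,\lambda'(l))=m\cdot l-l$; (iv) $h(m+m',n)=m\cdot h(m',n)+h(m,n)$, $h(m,n+n')=h(m,n)+n\cdot h(m,n')$; (v) $h(p\cdot m,p\cdot n)=p\cdot h(m,n)$. *)

theory Defs
  imports "HOL-Algebra.Algebra"
begin

(* Groups are HOL-Algebra groups; the paper's additive "+" is written \<otimes>,
   "-x" is inv x, 0 is \<one>. *)

definition group_action ::
  "('b, 'm) monoid_scheme \<Rightarrow> ('a, 'n) monoid_scheme \<Rightarrow> ('b \<Rightarrow> 'a \<Rightarrow> 'a) \<Rightarrow> bool" where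
  "group_action B A act \<longleftrightarrow> group B \<and> group A \<and>
     (\<forall>b \<in> carrier B. act b \<in> hom A A \<and> bij_betw (act b) (carrier A) (carrier A)) \<and>
     (\<forall>a \<in> carrier A. act \<one>\<^bsub>B\<^esub> a = a) \<and>
     (\<forall>b \<in> carrier B. \<forall>b' \<in> carrier B. \<forall>a \<in> carrier A.
        act (b \<otimes>\<^bsub>B\<^esub> b') a = act b (act b' a))"

definition crossed_module ::
  "('a, 'n) monoid_scheme \<Rightarrow> ('b, 'm) monoid_scheme \<Rightarrow> ('b \<Rightarrow> 'a \<Rightarrow> 'a) \<Rightarrow> ('a \<Rightarrow> 'b) \<Rightarrow> bool" where
  "crossed_module A B act \<alpha> \<longleftrightarrow> group_action B A act \<and> \<alpha> \<in> hom A B \<and>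
     (\<forall>b \<in> carrier B. \<forall>a \<in> carrier A.
        \<alpha> (act b a) = b \<otimes>\<^bsub>B\<^esub> \<alpha> a \<otimes>\<^bsub>B\<^esub> inv\<^bsub>B\<^esub> b) \<and>
     (\<forall>a \<in> carrier A. \<forall>a' \<in> carrier A.
        act (\<alpha> a) a' = a \<otimes>\<^bsub>A\<^esub> a' \<otimes>\<^bsub>A\<^esub> inv\<^bsub>A\<^esub> a)"

definition xmod_morphism ::
  "('a, 'n) monoid_scheme \<Rightarrow> ('b, 'm) monoid_scheme \<Rightarrow> ('b \<Rightarrow> 'a \<Rightarrow> 'a) \<Rightarrow> ('a \<Rightarrow> 'b) \<Rightarrow>
   ('c, 'o) monoid_scheme \<Rightarrow> ('d, 'p) monoid_scheme \<Rightarrow> ('d \<Rightarrow> 'c \<Rightarrow> 'c) \<Rightarrow> ('c \<Rightarrow> 'd) \<Rightarrow>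
   ('a \<Rightarrow> 'c) \<Rightarrow> ('b \<Rightarrow> 'd) \<Rightarrow> bool" where
  "xmod_morphism A B act \<alpha> A' B' act' \<alpha>' fA fB \<longleftrightarrow>
     fA \<in> hom A A' \<and> fB \<in> hom B B' \<and>
     (\<forall>a \<in> carrier A. fB (\<alpha> a) = \<alpha>' (fA a)) \<and>
     (\<forall>b \<in> carrier B. \<forall>a \<in> carrier A. fA (act b a) = act' (fB b) (fA a))"

definition pb_group ::
  "('a, 'n) monoid_scheme \<Rightarrow> ('a \<Rightarrow> 'c) \<Rightarrow> ('a \<Rightarrow> 'c) \<Rightarrow> ('a \<times> 'a) monoid" where
  "pb_group G s t = (G \<times>\<times> G)\<lparr>carrier :=
      {(x, y). x \<in> carrier G \<and> y \<in> carrier G \<and> s x = t y}\<rparr>"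

definition pb_act :: "('b \<Rightarrow> 'a \<Rightarrow> 'a) \<Rightarrow> 'b \<times> 'b \<Rightarrow> 'a \<times> 'a \<Rightarrow> 'a \<times> 'a" where
  "pb_act act = (\<lambda>(b, b') (x, y). (act b x, act b' y))"

definition pb_map :: "('a \<Rightarrow> 'b) \<Rightarrow> 'a \<times> 'a \<Rightarrow> 'b \<times> 'b" where
  "pb_map f = (\<lambda>(x, y). (f x, f y))"

definition internal_cat_xmod ::
  "('a, 'n) monoid_scheme \<Rightarrow> ('b, 'm) monoid_scheme \<Rightarrow> ('b \<Rightarrow> 'a \<Rightarrow> 'a) \<Rightarrow> ('a \<Rightarrow> 'b) \<Rightarrow>
   ('c, 'o) monoid_scheme \<Rightarrow> ('d, 'p) monoid_scheme \<Rightarrow> ('d \<Rightarrow> 'c \<Rightarrow> 'c) \<Rightarrow> ('c \<Rightarrow> 'd) \<Rightarrow>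
   ('a \<Rightarrow> 'c) \<Rightarrow> ('b \<Rightarrow> 'd) \<Rightarrow> ('a \<Rightarrow> 'c) \<Rightarrow> ('b \<Rightarrow> 'd) \<Rightarrow>
   ('c \<Rightarrow> 'a) \<Rightarrow> ('d \<Rightarrow> 'b) \<Rightarrow> ('a \<times> 'a \<Rightarrow> 'a) \<Rightarrow> ('b \<times> 'b \<Rightarrow> 'b) \<Rightarrow> bool" where
  "internal_cat_xmod A1 B1 act1 \<alpha>1 A0 B0 act0 \<alpha>0 sA sB tA tB eA eB mA mB \<longleftrightarrow>
     crossed_module A1 B1 act1 \<alpha>1 \<and> crossed_module A0 B0 act0 \<alpha>0 \<and>
     xmod_morphism A1 B1 act1 \<alpha>1 A0 B0 act0 \<alpha>0 sA sB \<and>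
     xmod_morphism A1 B1 act1 \<alpha>1 A0 B0 act0 \<alpha>0 tA tB \<and>
     xmod_morphism A0 B0 act0 \<alpha>0 A1 B1 act1 \<alpha>1 eA eB \<and>
     xmod_morphism (pb_group A1 sA tA) (pb_group B1 sB tB) (pb_act act1) (pb_map \<alpha>1)
                   A1 B1 act1 \<alpha>1 mA mB \<and>
     (\<forall>x \<in> carrier A0. sA (eA x) = x \<and> tA (eA x) = x) \<and>
     (\<forall>x \<in> carrier B0. sB (eB x) = x \<and> tB (eB x) = x) \<and>
     (\<forall>x \<in> carrier A1. \<forall>y \<in> carrier A1. sA x = tA y \<longrightarrow>
        sA (mA (x, y)) = sA y \<and> tA (mA (x, y)) = tA x) \<and>
     (\<forall>x \<in> carrier B1. \<forall>y \<in> carrier B1. sB x = tB y \<longrightarrow>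
        sB (mB (x, y)) = sB y \<and> tB (mB (x, y)) = tB x) \<and>
     (\<forall>x \<in> carrier A1. \<forall>y \<in> carrier A1. \<forall>z \<in> carrier A1.
        sA x = tA y \<longrightarrow> sA y = tA z \<longrightarrow> mA (x, mA (y, z)) = mA (mA (x, y), z)) \<and>
     (\<forall>x \<in> carrier B1. \<forall>y \<in> carrier B1. \<forall>z \<in> carrier B1.
        sB x = tB y \<longrightarrow> sB y = tB z \<longrightarrow> mB (x, mB (y, z)) = mB (mB (x, y), z)) \<and>
     (\<forall>x \<in> carrier A1. mA (eA (tA x), x) = x \<and> mA (x, eA (sA x)) = x) \<and>
     (\<forall>x \<in> carrier B1. mB (eB (tB x), x) = x \<and> mB (x, eB (sB x)) = x)"

definition crossed_square ::
  "('l, 'n1) monoid_scheme \<Rightarrow> ('m, 'n2) monoid_scheme \<Rightarrow> ('n, 'n3) monoid_scheme \<Rightarrow> ('p, 'n4) monoid_scheme \<Rightarrow>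
   ('l \<Rightarrow> 'm) \<Rightarrow> ('l \<Rightarrow> 'n) \<Rightarrow> ('m \<Rightarrow> 'p) \<Rightarrow> ('n \<Rightarrow> 'p) \<Rightarrow>
   ('p \<Rightarrow> 'l \<Rightarrow> 'l) \<Rightarrow> ('p \<Rightarrow> 'm \<Rightarrow> 'm) \<Rightarrow> ('p \<Rightarrow> 'n \<Rightarrow> 'n) \<Rightarrow>
   ('m \<Rightarrow> 'n \<Rightarrow> 'l) \<Rightarrow> bool" where
  "crossed_square L M N P lam lam' \<mu> \<nu> actL actM actN h \<longleftrightarrow>
     group L \<and> group M \<and> group N \<and> group P \<and>
     lam \<in> hom L M \<and> lam' \<in> hom L N \<and> \<mu> \<in> hom M P \<and> \<nu> \<in> hom N P \<and>
     (\<forall>l \<in> carrier L. \<nu> (lam' l) = \<mu> (lam l)) \<and>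
     group_action P L actL \<and> group_action P M actM \<and> group_action P N actN \<and>
     (\<forall>m \<in> carrier M. \<forall>n \<in> carrier N. h m n \<in> carrier L) \<and>
     (\<forall>p \<in> carrier P. \<forall>l \<in> carrier L.
        lam (actL p l) = actM p (lam l) \<and> lam' (actL p l) = actN p (lam' l)) \<and>
     crossed_module M P actM \<mu> \<and> crossed_module N P actN \<nu> \<and>
     crossed_module L P actL (\<lambda>x. \<mu> (lam x)) \<and>
     (\<forall>m \<in> carrier M. \<forall>n \<in> carrier N.
        lam (h m n) = m \<otimes>\<^bsub>M\<^esub> actM (\<nu> n) (inv\<^bsub>M\<^esub> m) \<and>
        lam' (h m n) = actN (\<mu> m) n \<otimes>\<^bsub>N\<^esub> inv\<^bsub>N\<^esub> n) \<and>
     (\<forall>l \<in> carrier L. \<forall>n \<in> carrier N.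
        h (lam l) n = l \<otimes>\<^bsub>L\<^esub> actL (\<nu> n) (inv\<^bsub>L\<^esub> l)) \<and>
     (\<forall>m \<in> carrier M. \<forall>l \<in> carrier L.
        h m (lam' l) = actL (\<mu> m) l \<otimes>\<^bsub>L\<^esub> inv\<^bsub>L\<^esub> l) \<and>
     (\<forall>m \<in> carrier M. \<forall>m' \<in> carrier M. \<forall>n \<in> carrier N.
        h (m \<otimes>\<^bsub>M\<^esub> m') n = actL (\<mu> m) (h m' n) \<otimes>\<^bsub>L\<^esub> h m n) \<and>
     (\<forall>m \<in> carrier M. \<forall>n \<in> carrier N. \<forall>n' \<in> carrier N.
        h m (n \<otimes>\<^bsub>N\<^esub> n') = h m n \<otimes>\<^bsub>L\<^esub> actL (\<nu> n) (h m n')) \<and>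
     (\<forall>p \<in> carrier P. \<forall>m \<in> carrier M. \<forall>n \<in> carrier N.
        h (actM p m) (actN p n) = actL p (h m n))"

end

theory Submission
  imports Defs
begin


lemma gh: "group G \<Longrightarrow> group H \<Longrightarrow> f \<in> hom G H \<Longrightarrow> group_hom G H f"
  by (simp add: group_hom_def group_hom_axioms_def)

locale icg =
  fixes G :: "('a,'n) monoid_scheme" (structure) and H :: "('c,'o) monoid_scheme"
    and s t :: "'a \<Rightarrow> 'c" and e :: "'c \<Rightarrow> 'a" and m :: "'a \<times> 'a \<Rightarrow> 'a"
  assumes G: "group G" and H: "group H" and s: "s \<in> hom G H" and t: "t \<in> hom G H"
    and e: "e \<in> hom H G" and m: "m \<in> hom (pb_group G s t) G"
    and se: "\<And>x. x \<in> carrier H \<Longrightarrow> s (e x) = x"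
    and te: "\<And>x. x \<in> carrier H \<Longrightarrow> t (e x) = x"
    and ul: "\<And>x. x \<in> carrier G \<Longrightarrow> m (e (t x), x) = x"
    and ur: "\<And>x. x \<in> carrier G \<Longrightarrow> m (x, e (s x)) = x"
begin

interpretation G: group G by (rule G)
interpretation H: group H by (rule H)
interpretation s: group_hom G H s by (rule gh[OF G H s])
interpretation t: group_hom G H t by (rule gh[OF G H t])
interpretation e: group_hom H G e by (rule gh[OF H G e])

lemma m_mult: "(x,y) \<in> carrier (pb_group G s t) \<Longrightarrow> (x',y') \<in> carrier (pb_group G s t) \<Longrightarrow>
   m (x \<otimes> x', y \<otimes> y') = m (x,y) \<otimes> m (x',y')"
  using m unfolding hom_def pb_group_def by (auto simp: Pi_def)

lemma pbc: "(x,y) \<in> carrier (pb_group G s t) \<longleftrightarrow> x \<in> carrier G \<and> y \<in> carrier G \<and> s x = t y"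
  by (simp add: pb_group_def)

lemma mformula:
  assumes x: "x \<in> carrier G" and y: "y \<in> carrier G" and st: "s x = t y"
  shows "m (x,y) = x \<otimes> inv (e (s x)) \<otimes> y"
proof -
  define u where "u = x \<otimes> inv (e (s x))"
  have ec: "e (s x) \<in> carrier G" using x by simp
  have uc: "u \<in> carrier G" using x ec by (simp add: u_def)
  have su: "s u = \<one>\<^bsub>H\<^esub>" using x ec by (simp add: u_def se)
  have p1: "(u, \<one>) \<in> carrier (pb_group G s t)" using uc su by (simp add: pbc)
  have p2: "(e (s x), y) \<in> carrier (pb_group G s t)" using ec y st by (simp add: pbc se)
  have "m (u \<otimes> e (s x), \<one> \<otimes> y) = m (u, \<one>) \<otimes> m (e (s x), y)" by (rule m_mult[OF p1 p2])
  moreover have "u \<otimes> e (s x) = x" using x ec by (simp add: u_def G.m_assoc)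
  moreover have "m (u, \<one>) = u" using ur[OF uc] su by simp
  moreover have "m (e (s x), y) = y" using ul[OF y] st by simp
  ultimately show ?thesis using y by (simp add: u_def)
qed

lemma mcomm:
  assumes a: "a \<in> carrier G" and b: "b \<in> carrier G" and sa: "s a = \<one>\<^bsub>H\<^esub>" and tb: "t b = \<one>\<^bsub>H\<^esub>"
  shows "a \<otimes> b = b \<otimes> a"
proof -
  have p1: "(a, \<one>) \<in> carrier (pb_group G s t)" using a sa by (simp add: pbc)
  have p2: "(\<one>, b) \<in> carrier (pb_group G s t)" using b tb by (simp add: pbc)
  have "m (a \<otimes> \<one>, \<one> \<otimes> b) = m (a, \<one>) \<otimes> m (\<one>, b)" by (rule m_mult[OF p1 p2])
  moreover have "m (\<one> \<otimes> a, b \<otimes> \<one>) = m (\<one>, b) \<otimes> m (a, \<one>)" by (rule m_mult[OF p2 p1])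
  moreover have "m (a, \<one>) = a" using mformula[of a \<one>] a sa by simp
  moreover have "m (\<one>, b) = b" using mformula[of \<one> b] b tb by simp
  ultimately show ?thesis using a b by simp
qed

end



locale icx =
  fixes A1 :: "'a monoid" and B1 :: "'b monoid" and A0 :: "'c monoid" and B0 :: "'d monoid"
    and act1 :: "'b \<Rightarrow> 'a \<Rightarrow> 'a" and \<alpha>1 :: "'a \<Rightarrow> 'b"
    and act0 :: "'d \<Rightarrow> 'c \<Rightarrow> 'c" and \<alpha>0 :: "'c \<Rightarrow> 'd"
    and sA tA :: "'a \<Rightarrow> 'c" and sB tB :: "'b \<Rightarrow> 'd"
    and eA :: "'c \<Rightarrow> 'a" and eB :: "'d \<Rightarrow> 'b"
    and mA :: "'a \<times> 'a \<Rightarrow> 'a" and mB :: "'b \<times> 'b \<Rightarrow> 'b"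
  assumes ic: "internal_cat_xmod A1 B1 act1 \<alpha>1 A0 B0 act0 \<alpha>0 sA sB tA tB eA eB mA mB"
begin

lemma cm1: "crossed_module A1 B1 act1 \<alpha>1" and cm0: "crossed_module A0 B0 act0 \<alpha>0"
  and ms: "xmod_morphism A1 B1 act1 \<alpha>1 A0 B0 act0 \<alpha>0 sA sB"
  and mt: "xmod_morphism A1 B1 act1 \<alpha>1 A0 B0 act0 \<alpha>0 tA tB"
  and me: "xmod_morphism A0 B0 act0 \<alpha>0 A1 B1 act1 \<alpha>1 eA eB"
  and mm: "xmod_morphism (pb_group A1 sA tA) (pb_group B1 sB tB) (pb_act act1) (pb_map \<alpha>1) A1 B1 act1 \<alpha>1 mA mB"
  and seA: "\<And>x. x \<in> carrier A0 \<Longrightarrow> sA (eA x) = x" and teA: "\<And>x. x \<in> carrier A0 \<Longrightarrow> tA (eA x) = x"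
  and seB: "\<And>x. x \<in> carrier B0 \<Longrightarrow> sB (eB x) = x" and teB: "\<And>x. x \<in> carrier B0 \<Longrightarrow> tB (eB x) = x"
  and ulA: "\<And>x. x \<in> carrier A1 \<Longrightarrow> mA (eA (tA x), x) = x"
  and urA: "\<And>x. x \<in> carrier A1 \<Longrightarrow> mA (x, eA (sA x)) = x"
  and ulB: "\<And>x. x \<in> carrier B1 \<Longrightarrow> mB (eB (tB x), x) = x"
  and urB: "\<And>x. x \<in> carrier B1 \<Longrightarrow> mB (x, eB (sB x)) = x"
  using ic unfolding internal_cat_xmod_def by blast+

lemma gA1: "group A1" and gB1: "group B1" and gA0: "group A0" and gB0: "group B0"
  using cm1 cm0 unfolding crossed_module_def group_action_def by blast+

lemma act1_hom: "b \<in> carrier B1 \<Longrightarrow> group_hom A1 A1 (act1 b)"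
  using cm1 gA1 unfolding crossed_module_def group_action_def by (blast intro: gh)
lemma act0_hom: "b \<in> carrier B0 \<Longrightarrow> group_hom A0 A0 (act0 b)"
  using cm0 gA0 unfolding crossed_module_def group_action_def by (blast intro: gh)
lemma act1_one: "a \<in> carrier A1 \<Longrightarrow> act1 \<one>\<^bsub>B1\<^esub> a = a"
  using cm1 unfolding crossed_module_def group_action_def by blast
lemma act0_one: "a \<in> carrier A0 \<Longrightarrow> act0 \<one>\<^bsub>B0\<^esub> a = a"
  using cm0 unfolding crossed_module_def group_action_def by blast
lemma act1_comp: "b \<in> carrier B1 \<Longrightarrow> b' \<in> carrier B1 \<Longrightarrow> a \<in> carrier A1 \<Longrightarrow>
   act1 (b \<otimes>\<^bsub>B1\<^esub> b') a = act1 b (act1 b' a)"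
  using cm1 unfolding crossed_module_def group_action_def by blast
lemma a1hom: "group_hom A1 B1 \<alpha>1" using cm1 gA1 gB1 unfolding crossed_module_def by (blast intro: gh)
lemma a0hom: "group_hom A0 B0 \<alpha>0" using cm0 gA0 gB0 unfolding crossed_module_def by (blast intro: gh)
lemma a1act: "b \<in> carrier B1 \<Longrightarrow> a \<in> carrier A1 \<Longrightarrow>
   \<alpha>1 (act1 b a) = b \<otimes>\<^bsub>B1\<^esub> \<alpha>1 a \<otimes>\<^bsub>B1\<^esub> inv\<^bsub>B1\<^esub> b"
  using cm1 unfolding crossed_module_def by blast
lemma peif1: "a \<in> carrier A1 \<Longrightarrow> a' \<in> carrier A1 \<Longrightarrow>
   act1 (\<alpha>1 a) a' = a \<otimes>\<^bsub>A1\<^esub> a' \<otimes>\<^bsub>A1\<^esub> inv\<^bsub>A1\<^esub> a"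
  using cm1 unfolding crossed_module_def by blast

lemma sAh: "group_hom A1 A0 sA" and sBh: "group_hom B1 B0 sB"
  and tAh: "group_hom A1 A0 tA" and tBh: "group_hom B1 B0 tB"
  and eAh: "group_hom A0 A1 eA" and eBh: "group_hom B0 B1 eB"
  using ms mt me gA1 gB1 gA0 gB0 unfolding xmod_morphism_def by (blast intro: gh)+

lemma sBa: "a \<in> carrier A1 \<Longrightarrow> sB (\<alpha>1 a) = \<alpha>0 (sA a)"
  and tBa: "a \<in> carrier A1 \<Longrightarrow> tB (\<alpha>1 a) = \<alpha>0 (tA a)"
  and eBa: "n \<in> carrier A0 \<Longrightarrow> eB (\<alpha>0 n) = \<alpha>1 (eA n)"
  using ms mt me unfolding xmod_morphism_def by blast+

lemma sAact: "b \<in> carrier B1 \<Longrightarrow> a \<in> carrier A1 \<Longrightarrow> sA (act1 b a) = act0 (sB b) (sA a)"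
  and tAact: "b \<in> carrier B1 \<Longrightarrow> a \<in> carrier A1 \<Longrightarrow> tA (act1 b a) = act0 (tB b) (tA a)"
  and eAact: "p \<in> carrier B0 \<Longrightarrow> n \<in> carrier A0 \<Longrightarrow> eA (act0 p n) = act1 (eB p) (eA n)"
  using ms mt me unfolding xmod_morphism_def by blast+

lemma mAh: "mA \<in> hom (pb_group A1 sA tA) A1" and mBh: "mB \<in> hom (pb_group B1 sB tB) B1"
  using mm unfolding xmod_morphism_def by blast+

lemma mAact: "(b,b') \<in> carrier (pb_group B1 sB tB) \<Longrightarrow> (x,y) \<in> carrier (pb_group A1 sA tA) \<Longrightarrow>
   mA (act1 b x, act1 b' y) = act1 (mB (b,b')) (mA (x,y))"
  using mm unfolding xmod_morphism_def pb_act_def by fastforce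

lemma icgA: "icg A1 A0 sA tA eA mA"
  by (rule icg.intro) (use gA1 gA0 sAh tAh eAh mAh seA teA ulA urA in \<open>auto simp: group_hom_def group_hom_axioms_def\<close>)
lemma icgB: "icg B1 B0 sB tB eB mB"
  by (rule icg.intro) (use gB1 gB0 sBh tBh eBh mBh seB teB ulB urB in \<open>auto simp: group_hom_def group_hom_axioms_def\<close>)

end



context icx begin

interpretation A1: group A1 by (rule gA1)
interpretation B1: group B1 by (rule gB1)
interpretation A0: group A0 by (rule gA0)
interpretation B0: group B0 by (rule gB0)
interpretation sA: group_hom A1 A0 sA by (rule sAh)
interpretation tA: group_hom A1 A0 tA by (rule tAh)
interpretation sB: group_hom B1 B0 sB by (rule sBh)
interpretation tB: group_hom B1 B0 tB by (rule tBh)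
interpretation eA: group_hom A0 A1 eA by (rule eAh)
interpretation eB: group_hom B0 B1 eB by (rule eBh)

lemmas mfA = icg.mformula[OF icgA] and mfB = icg.mformula[OF icgB]
lemmas pbcA = icg.pbc[OF icgA] and pbcB = icg.pbc[OF icgB]

lemma act1c: "b \<in> carrier B1 \<Longrightarrow> a \<in> carrier A1 \<Longrightarrow> act1 b a \<in> carrier A1"
  using act1_hom group_hom.hom_closed by fastforce
lemma act1_1: "b \<in> carrier B1 \<Longrightarrow> act1 b \<one>\<^bsub>A1\<^esub> = \<one>\<^bsub>A1\<^esub>"
  using act1_hom group_hom.hom_one by fastforce
lemma act1_mult: "b \<in> carrier B1 \<Longrightarrow> a \<in> carrier A1 \<Longrightarrow> a' \<in> carrier A1 \<Longrightarrow>
   act1 b (a \<otimes>\<^bsub>A1\<^esub> a') = act1 b a \<otimes>\<^bsub>A1\<^esub> act1 b a'"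
  using act1_hom group_hom.hom_mult by fastforce
lemma act1_inv: "b \<in> carrier B1 \<Longrightarrow> a \<in> carrier A1 \<Longrightarrow> act1 b (inv\<^bsub>A1\<^esub> a) = inv\<^bsub>A1\<^esub> (act1 b a)"
  using act1_hom group_hom.hom_inv by fastforce
lemma act0c: "b \<in> carrier B0 \<Longrightarrow> a \<in> carrier A0 \<Longrightarrow> act0 b a \<in> carrier A0"
  using act0_hom group_hom.hom_closed by fastforce
lemma act0_1: "b \<in> carrier B0 \<Longrightarrow> act0 b \<one>\<^bsub>A0\<^esub> = \<one>\<^bsub>A0\<^esub>"
  using act0_hom group_hom.hom_one by fastforce

lemma K2:
  assumes m: "m \<in> carrier B1" and l: "l \<in> carrier A1" and sl: "sA l = \<one>\<^bsub>A0\<^esub>"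
  shows "act1 (eB (tB m)) l = act1 m l"
proof -
  define c where "c = eB (tB m)"
  have c: "c \<in> carrier B1" using m by (simp add: c_def)
  have p1: "(c, m) \<in> carrier (pb_group B1 sB tB)" using c m by (simp add: pbcB c_def seB)
  have p2: "(l, \<one>\<^bsub>A1\<^esub>) \<in> carrier (pb_group A1 sA tA)" using l sl by (simp add: pbcA)
  have e: "mA (act1 c l, act1 m \<one>\<^bsub>A1\<^esub>) = act1 (mB (c,m)) (mA (l,\<one>\<^bsub>A1\<^esub>))" by (rule mAact[OF p1 p2])
  have x: "act1 c l \<in> carrier A1" using c l by (rule act1c)
  have sx: "sA (act1 c l) = \<one>\<^bsub>A0\<^esub>" using c l sl m by (simp add: sAact c_def seB act0_1)
  have "mA (act1 c l, \<one>\<^bsub>A1\<^esub>) = act1 c l" using mfA[of "act1 c l" "\<one>\<^bsub>A1\<^esub>"] x sx by simp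
  moreover have "mB (c, m) = m" using mfB[of c m] c m by (simp add: c_def seB B1.m_assoc[symmetric])
  moreover have "mA (l, \<one>\<^bsub>A1\<^esub>) = l" using mfA[of l "\<one>\<^bsub>A1\<^esub>"] l sl by simp
  ultimately show ?thesis using e m by (simp add: act1_1 c_def)
qed

lemma K3:
  assumes m: "m \<in> carrier B1" and sm: "sB m = \<one>\<^bsub>B0\<^esub>" and l: "l \<in> carrier A1" and sl: "sA l = \<one>\<^bsub>A0\<^esub>"
  shows "act1 m (eA (tA l)) \<otimes>\<^bsub>A1\<^esub> inv\<^bsub>A1\<^esub> (eA (tA l)) = act1 m l \<otimes>\<^bsub>A1\<^esub> inv\<^bsub>A1\<^esub> l"
proof -
  define n where "n = tA l"
  have n: "n \<in> carrier A0" using l by (simp add: n_def)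
  have en: "eA n \<in> carrier A1" using n by simp
  have p1: "(m, \<one>\<^bsub>B1\<^esub>) \<in> carrier (pb_group B1 sB tB)" using m sm by (simp add: pbcB)
  have p2: "(eA n, l) \<in> carrier (pb_group A1 sA tA)" using en l by (simp add: pbcA seA n n_def)
  have e: "mA (act1 m (eA n), act1 \<one>\<^bsub>B1\<^esub> l) = act1 (mB (m,\<one>\<^bsub>B1\<^esub>)) (mA (eA n, l))" by (rule mAact[OF p1 p2])
  have x: "act1 m (eA n) \<in> carrier A1" using m en by (rule act1c)
  have sx: "sA (act1 m (eA n)) = n" using m en n by (simp add: sAact sm seA act0_one)
  have "mA (act1 m (eA n), l) = act1 m (eA n) \<otimes>\<^bsub>A1\<^esub> inv\<^bsub>A1\<^esub> (eA n) \<otimes>\<^bsub>A1\<^esub> l"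
    using mfA[OF x l] sx by (simp add: n_def)
  moreover have "mB (m, \<one>\<^bsub>B1\<^esub>) = m" using mfB[of m "\<one>\<^bsub>B1\<^esub>"] m sm by simp
  moreover have "mA (eA n, l) = l" using mfA[OF en l] en l n by (simp add: seA n_def A1.m_assoc[symmetric])
  ultimately have "act1 m (eA n) \<otimes>\<^bsub>A1\<^esub> inv\<^bsub>A1\<^esub> (eA n) \<otimes>\<^bsub>A1\<^esub> l = act1 m l"
    using e l by (simp add: act1_one)
  hence "act1 m (eA n) \<otimes>\<^bsub>A1\<^esub> inv\<^bsub>A1\<^esub> (eA n) \<otimes>\<^bsub>A1\<^esub> l \<otimes>\<^bsub>A1\<^esub> inv\<^bsub>A1\<^esub> l = act1 m l \<otimes>\<^bsub>A1\<^esub> inv\<^bsub>A1\<^esub> l" by simp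
  thus ?thesis using x en l by (simp add: A1.m_assoc n_def)
qed

lemma PM:
  assumes m: "m \<in> carrier B1" and m': "m' \<in> carrier B1" and sm': "sB m' = \<one>\<^bsub>B0\<^esub>"
  shows "eB (tB m) \<otimes>\<^bsub>B1\<^esub> m' \<otimes>\<^bsub>B1\<^esub> inv\<^bsub>B1\<^esub> (eB (tB m)) = m \<otimes>\<^bsub>B1\<^esub> m' \<otimes>\<^bsub>B1\<^esub> inv\<^bsub>B1\<^esub> m"
proof -
  define c where "c = eB (tB m)"
  define b where "b = m \<otimes>\<^bsub>B1\<^esub> inv\<^bsub>B1\<^esub> c"
  define x where "x = c \<otimes>\<^bsub>B1\<^esub> m' \<otimes>\<^bsub>B1\<^esub> inv\<^bsub>B1\<^esub> c"
  have c: "c \<in> carrier B1" using m by (simp add: c_def)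
  have b: "b \<in> carrier B1" using c m by (simp add: b_def)
  have xc: "x \<in> carrier B1" using c m' by (simp add: x_def)
  have tb: "tB b = \<one>\<^bsub>B0\<^esub>" using c m by (simp add: b_def c_def teB)
  have sx: "sB x = \<one>\<^bsub>B0\<^esub>" using c m' m sm' by (simp add: x_def c_def seB)
  have comm: "x \<otimes>\<^bsub>B1\<^esub> b = b \<otimes>\<^bsub>B1\<^esub> x" by (rule icg.mcomm[OF icgB xc b sx tb])
  have mb: "m = b \<otimes>\<^bsub>B1\<^esub> c" using m c by (simp add: b_def B1.m_assoc)
  have "m \<otimes>\<^bsub>B1\<^esub> m' \<otimes>\<^bsub>B1\<^esub> inv\<^bsub>B1\<^esub> m = b \<otimes>\<^bsub>B1\<^esub> x \<otimes>\<^bsub>B1\<^esub> inv\<^bsub>B1\<^esub> b"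
    using b c m' by (simp add: mb x_def B1.m_assoc B1.inv_mult_group)
  also have "\<dots> = x" using comm[symmetric] b xc by (simp add: B1.m_assoc)
  finally show ?thesis by (simp add: x_def c_def)
qed

end



lemma (in group) cancel1: "x \<in> carrier G \<Longrightarrow> y \<in> carrier G \<Longrightarrow> inv x \<otimes> (x \<otimes> y) = y"
  by (simp add: m_assoc[symmetric])
lemma (in group) cancel2: "x \<in> carrier G \<Longrightarrow> y \<in> carrier G \<Longrightarrow> x \<otimes> (inv x \<otimes> y) = y"
  by (simp add: m_assoc[symmetric])

context icx begin

interpretation A1: group A1 by (rule gA1)
interpretation B1: group B1 by (rule gB1)
interpretation A0: group A0 by (rule gA0)
interpretation B0: group B0 by (rule gB0)
interpretation sA: group_hom A1 A0 sA by (rule sAh)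
interpretation tA: group_hom A1 A0 tA by (rule tAh)
interpretation sB: group_hom B1 B0 sB by (rule sBh)
interpretation tB: group_hom B1 B0 tB by (rule tBh)
interpretation eA: group_hom A0 A1 eA by (rule eAh)
interpretation eB: group_hom B0 B1 eB by (rule eBh)
interpretation a1: group_hom A1 B1 \<alpha>1 by (rule a1hom)
interpretation a0: group_hom A0 B0 \<alpha>0 by (rule a0hom)

lemma kerA: "l \<in> kernel A1 A0 sA \<longleftrightarrow> l \<in> carrier A1 \<and> sA l = \<one>\<^bsub>A0\<^esub>" by (simp add: kernel_def)
lemma kerB: "l \<in> kernel B1 B0 sB \<longleftrightarrow> l \<in> carrier B1 \<and> sB l = \<one>\<^bsub>B0\<^esub>" by (simp add: kernel_def)

lemma subK: "subgroup (kernel A1 A0 sA) A1" by (rule sA.subgroup_kernel)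
lemma subKB: "subgroup (kernel B1 B0 sB) B1" by (rule sB.subgroup_kernel)

lemma actLK: "p \<in> carrier B0 \<Longrightarrow> l \<in> kernel A1 A0 sA \<Longrightarrow> act1 (eB p) l \<in> kernel A1 A0 sA"
  by (simp add: kerA act1c sAact seB act0_1)

lemma actL_inv: "p \<in> carrier B0 \<Longrightarrow> l \<in> carrier A1 \<Longrightarrow> act1 (eB (inv\<^bsub>B0\<^esub> p)) (act1 (eB p) l) = l"
  by (simp add: act1_comp[symmetric] act1_one eB.hom_mult[symmetric])

lemma actMK: "p \<in> carrier B0 \<Longrightarrow> m \<in> kernel B1 B0 sB \<Longrightarrow>
   eB p \<otimes>\<^bsub>B1\<^esub> m \<otimes>\<^bsub>B1\<^esub> inv\<^bsub>B1\<^esub> (eB p) \<in> kernel B1 B0 sB"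
  by (simp add: kerB seB)

lemma hK: "m \<in> kernel B1 B0 sB \<Longrightarrow> n \<in> carrier A0 \<Longrightarrow>
   act1 m (eA n) \<otimes>\<^bsub>A1\<^esub> inv\<^bsub>A1\<^esub> (eA n) \<in> kernel A1 A0 sA"
  by (simp add: kerA kerB act1c sAact seA act0_one)

end



context icx begin

interpretation A1: group A1 by (rule gA1)
interpretation B1: group B1 by (rule gB1)
interpretation A0: group A0 by (rule gA0)
interpretation B0: group B0 by (rule gB0)
interpretation sA: group_hom A1 A0 sA by (rule sAh)
interpretation tA: group_hom A1 A0 tA by (rule tAh)
interpretation sB: group_hom B1 B0 sB by (rule sBh)
interpretation tB: group_hom B1 B0 tB by (rule tBh)
interpretation eA: group_hom A0 A1 eA by (rule eAh)
interpretation eB: group_hom B0 B1 eB by (rule eBh)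
interpretation a1: group_hom A1 B1 \<alpha>1 by (rule a1hom)
interpretation a0: group_hom A0 B0 \<alpha>0 by (rule a0hom)

lemma main:
  "crossed_square
           (A1\<lparr>carrier := kernel A1 A0 sA\<rparr>) (B1\<lparr>carrier := kernel B1 B0 sB\<rparr>) A0 B0
           \<alpha>1 tA tB \<alpha>0
           (\<lambda>p l. act1 (eB p) l)
           (\<lambda>p m. eB p \<otimes>\<^bsub>B1\<^esub> m \<otimes>\<^bsub>B1\<^esub> inv\<^bsub>B1\<^esub> (eB p))
           act0
           (\<lambda>m n. act1 m (eA n) \<otimes>\<^bsub>A1\<^esub> inv\<^bsub>A1\<^esub> (eA n))"
proof -
  let ?K = "kernel A1 A0 sA" and ?KB = "kernel B1 B0 sB"
  let ?L = "A1\<lparr>carrier := ?K\<rparr>" and ?M = "B1\<lparr>carrier := ?KB\<rparr>"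
  have gL: "group ?L" by (rule subgroup.subgroup_is_group[OF subK gA1])
  have gM: "group ?M" by (rule subgroup.subgroup_is_group[OF subKB gB1])
  have invL: "\<And>l. l \<in> ?K \<Longrightarrow> inv\<^bsub>?L\<^esub> l = inv\<^bsub>A1\<^esub> l" using A1.m_inv_consistent[OF subK] by simp
  have invM: "\<And>l. l \<in> ?KB \<Longrightarrow> inv\<^bsub>?M\<^esub> l = inv\<^bsub>B1\<^esub> l" using B1.m_inv_consistent[OF subKB] by simp
  have hL: "\<alpha>1 \<in> hom ?L ?M" by (auto simp: hom_def kerA kerB sBa)
  have hL': "tA \<in> hom ?L A0" by (auto simp: hom_def kerA)
  have hM: "tB \<in> hom ?M B0" by (auto simp: hom_def kerB)
  have hN: "\<alpha>0 \<in> hom A0 B0" by simp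
  have gaL: "group_action B0 ?L (\<lambda>p l. act1 (eB p) l)"
    unfolding group_action_def
  proof (intro conjI ballI)
    fix p assume p: "p \<in> carrier B0"
    show "act1 (eB p) \<in> hom ?L ?L" using p by (auto simp: hom_def actLK kerA act1_mult act1c sAact seB act0_1)
    show "bij_betw (act1 (eB p)) (carrier ?L) (carrier ?L)"
      by (rule bij_betw_byWitness[where f'="act1 (eB (inv\<^bsub>B0\<^esub> p))"])
         (use p actL_inv[of p] actL_inv[of "inv\<^bsub>B0\<^esub> p"] actLK[of p] actLK[of "inv\<^bsub>B0\<^esub> p"] in \<open>auto simp del: eB.hom_inv simp: kerA\<close>)
  next
    fix a assume "a \<in> carrier ?L" thus "act1 (eB \<one>\<^bsub>B0\<^esub>) a = a" by (simp add: kerA act1_one)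
  next
    fix p p' a assume "p \<in> carrier B0" "p' \<in> carrier B0" "a \<in> carrier ?L"
    thus "act1 (eB (p \<otimes>\<^bsub>B0\<^esub> p')) a = act1 (eB p) (act1 (eB p') a)" by (simp add: kerA act1_comp)
  qed (use gL in auto)
  have gaM: "group_action B0 ?M (\<lambda>p m. eB p \<otimes>\<^bsub>B1\<^esub> m \<otimes>\<^bsub>B1\<^esub> inv\<^bsub>B1\<^esub> (eB p))"
    unfolding group_action_def
  proof (intro conjI ballI)
    fix p assume p: "p \<in> carrier B0"
    have c: "eB p \<in> carrier B1" using p by simp
    show "(\<lambda>m. eB p \<otimes>\<^bsub>B1\<^esub> m \<otimes>\<^bsub>B1\<^esub> inv\<^bsub>B1\<^esub> (eB p)) \<in> hom ?M ?M"
      using p c actMK[OF p] by (auto simp: hom_def kerB B1.m_assoc B1.cancel1)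
    show "bij_betw (\<lambda>m. eB p \<otimes>\<^bsub>B1\<^esub> m \<otimes>\<^bsub>B1\<^esub> inv\<^bsub>B1\<^esub> (eB p)) (carrier ?M) (carrier ?M)"
      by (rule bij_betw_byWitness[where f'="\<lambda>m. inv\<^bsub>B1\<^esub> (eB p) \<otimes>\<^bsub>B1\<^esub> m \<otimes>\<^bsub>B1\<^esub> eB p"])
         (use p c actMK[OF p] actMK[of "inv\<^bsub>B0\<^esub> p"] in \<open>auto simp: kerB B1.m_assoc B1.cancel1 B1.cancel2\<close>)
  next
    fix a assume "a \<in> carrier ?M" thus "eB \<one>\<^bsub>B0\<^esub> \<otimes>\<^bsub>B1\<^esub> a \<otimes>\<^bsub>B1\<^esub> inv\<^bsub>B1\<^esub> (eB \<one>\<^bsub>B0\<^esub>) = a" by (simp add: kerB)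
  next
    fix p p' a assume "p \<in> carrier B0" "p' \<in> carrier B0" "a \<in> carrier ?M"
    thus "eB (p \<otimes>\<^bsub>B0\<^esub> p') \<otimes>\<^bsub>B1\<^esub> a \<otimes>\<^bsub>B1\<^esub> inv\<^bsub>B1\<^esub> (eB (p \<otimes>\<^bsub>B0\<^esub> p')) =
       eB p \<otimes>\<^bsub>B1\<^esub> (eB p' \<otimes>\<^bsub>B1\<^esub> a \<otimes>\<^bsub>B1\<^esub> inv\<^bsub>B1\<^esub> (eB p')) \<otimes>\<^bsub>B1\<^esub> inv\<^bsub>B1\<^esub> (eB p)"
      by (simp add: kerB B1.m_assoc B1.inv_mult_group)
  qed (use gM in auto)
  have gaN: "group_action B0 A0 act0" using cm0 unfolding crossed_module_def by blast
  show ?thesis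
    unfolding crossed_square_def
    apply (intro conjI)
    subgoal by (rule gL)
    subgoal by (rule gM)
    subgoal by (rule gA0)
    subgoal by (rule gB0)
    subgoal by (rule hL)
    subgoal by (rule hL')
    subgoal by (rule hM)
    subgoal by (rule hN)
    subgoal by (simp add: kerA tBa)
    subgoal by (rule gaL)
    subgoal by (rule gaM)
    subgoal by (rule gaN)
    subgoal using hK by simp
    subgoal by (simp add: kerA a1act tAact teB)
    subgoal unfolding crossed_module_def
      apply (intro conjI)
      subgoal by (rule gaM)
      subgoal by (rule hM)
      subgoal by (auto simp: kerB teB B1.m_assoc B0.m_assoc)
      subgoal using PM invM by (simp add: kerB)
      done
    subgoal by (rule cm0)
    subgoal unfolding crossed_module_def
      apply (intro conjI)
      subgoal by (rule gaL)
      subgoal by (auto simp: hom_def kerA)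
      subgoal by (auto simp: kerA teB a1act B1.m_assoc B0.m_assoc)
      subgoal using K2 invL peif1 by (simp add: kerA)
      done
    subgoal by (simp add: invM invL kerA kerB a1act eBa tAact teA act1c B1.m_assoc)
    subgoal by (simp add: invL kerA eBa peif1 A1.m_assoc)
    subgoal by (simp add: K3 K2 invL kerA kerB)
    subgoal
    proof (intro ballI)
      fix m m' n assume m: "m \<in> carrier ?M" and m': "m' \<in> carrier ?M" and n: "n \<in> carrier A0"
      have hk: "act1 m' (eA n) \<otimes>\<^bsub>A1\<^esub> inv\<^bsub>A1\<^esub> (eA n) \<in> ?K" using m' n by (simp add: hK)
      hence e: "act1 (eB (tB m)) (act1 m' (eA n) \<otimes>\<^bsub>A1\<^esub> inv\<^bsub>A1\<^esub> (eA n))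
          = act1 m (act1 m' (eA n) \<otimes>\<^bsub>A1\<^esub> inv\<^bsub>A1\<^esub> (eA n))" using K2 m by (simp add: kerA kerB)
      show "act1 (m \<otimes>\<^bsub>?M\<^esub> m') (eA n) \<otimes>\<^bsub>A1\<^esub> inv\<^bsub>A1\<^esub> (eA n) =
         act1 (eB (tB m)) (act1 m' (eA n) \<otimes>\<^bsub>A1\<^esub> inv\<^bsub>A1\<^esub> (eA n)) \<otimes>\<^bsub>?L\<^esub>
         (act1 m (eA n) \<otimes>\<^bsub>A1\<^esub> inv\<^bsub>A1\<^esub> (eA n))"
        using m m' n by (simp add: e kerB act1_comp act1_mult act1_inv act1c A1.m_assoc A1.cancel1)
    qed
    subgoal by (simp add: kerB eBa peif1 act1_mult act1_inv act1c A1.m_assoc A1.cancel1 A1.inv_mult_group)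
    subgoal
    proof -
      have aux: "\<And>c y. c \<in> carrier B1 \<Longrightarrow> y \<in> carrier A1 \<Longrightarrow> act1 (inv\<^bsub>B1\<^esub> c) (act1 c y) = y"
        by (simp add: act1_comp[symmetric] act1_one)
      show ?thesis by (auto simp: kerB eAact act1_comp act1_mult act1_inv act1c act1_one aux)
    qed
    done
qed

end

theorem mainTheorem2:
  fixes A1 :: "'a monoid" and B1 :: "'b monoid" and A0 :: "'c monoid" and B0 :: "'d monoid"
    and act1 :: "'b \<Rightarrow> 'a \<Rightarrow> 'a" and \<alpha>1 :: "'a \<Rightarrow> 'b"
    and act0 :: "'d \<Rightarrow> 'c \<Rightarrow> 'c" and \<alpha>0 :: "'c \<Rightarrow> 'd"
    and sA tA :: "'a \<Rightarrow> 'c" and sB tB :: "'b \<Rightarrow> 'd"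
    and eA :: "'c \<Rightarrow> 'a" and eB :: "'d \<Rightarrow> 'b"
    and mA :: "'a \<times> 'a \<Rightarrow> 'a" and mB :: "'b \<times> 'b \<Rightarrow> 'b"
  assumes "internal_cat_xmod A1 B1 act1 \<alpha>1 A0 B0 act0 \<alpha>0 sA sB tA tB eA eB mA mB"
  shows "crossed_square
           (A1\<lparr>carrier := kernel A1 A0 sA\<rparr>) (B1\<lparr>carrier := kernel B1 B0 sB\<rparr>) A0 B0
           \<alpha>1 tA tB \<alpha>0
           (\<lambda>p l. act1 (eB p) l)
           (\<lambda>p m. eB p \<otimes>\<^bsub>B1\<^esub> m \<otimes>\<^bsub>B1\<^esub> inv\<^bsub>B1\<^esub> (eB p))
           act0
           (\<lambda>m n. act1 m (eA n) \<otimes>\<^bsub>A1\<^esub> inv\<^bsub>A1\<^esub> (eA n))"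
    using icx.main[OF icx.intro[OF assms]] .

end
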